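(* Let $V$ be a real vector space of finite even dimension $n$ with a quadratic form $Q$ of anti-Lorentz signature $(1,n-1)$, and let $\rho$ be a $c$-compatible irreducible representation of $\mathbb{C}l(V)$ on a finite-dimensional complex vector space $K$ with nondegenerate hermitian form $(\cdot,\cdot)$. Let $K=K_L\oplus K_R$ where $K_L$ (resp. $K_R$) is the $-1$ (resp. $+1$) eigenspace of the chirality operator $\chi$. Let $w\in V$ be a nonzero spacelike vector and $(\psi,\phi)_w:=(\psi,\rho(w)\phi)$. Then $K_L$ and $K_R$ are orthogonal to each other for $(\cdot,\cdot)_w$, and if $n>2$, the restriction of $(\cdot,\cdot)_w$ to each of $K_L$ and $K_R$ is neutral.
   Context: $Cl(V,Q)$ is the real Clifford algebra with $v^2=+Q(v)$, $\mathbb{C}l(V)$ its complexification with complex conjugation $c$, $T$ the linear antiautomorphism restricting to the identity on $V$, $a^\times=c(T(a))$. $\rho$ is $c$-compatible if $(\rho(a)\psi,\phi)=(\psi,\rho(a^\times)\phi)$. In the anti-Lorentzian setting a vector $v$ is timelike if $Q(v)>0$ and spacelike if $Q(v)<0$. The chirality operator is $\chi=(-i)^{n/2+q}\rho(\omega)$ with $q=n-1$ and $\omega=e_1\cdots e_n$ the volume element of a pseudo-orthonormal basis of $V$. A hermitian form is neutral if its positive and negative indices of inertia are equal. *)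

theory Defs
  imports "HOL-Analysis.Analysis"
begin

text \<open>The spinor space K is modelled as complex^'m (finite-dimensional, nonzero). A representation rho of the complexified
Clifford algebra is determined (universal property) by a real-linear map
gamma = rho restricted to V with gamma(v)^2 = Q(v) id.\<close>

definition herm :: "complex^'m^'m \<Rightarrow> complex^'m \<Rightarrow> complex^'m \<Rightarrow> complex" where
  "herm H \<psi> \<phi> = (\<Sum>i\<in>UNIV. cnj (\<psi>$i) * (H *v \<phi>)$i)"

definition hermitian_form :: "complex^'m^'m \<Rightarrow> bool" where
  "hermitian_form H \<longleftrightarrow> (\<forall>\<psi> \<phi>. herm H \<psi> \<phi> = cnj (herm H \<phi> \<psi>))"

definition nondegenerate_form :: "complex^'m^'m \<Rightarrow> bool" where
  "nondegenerate_form H \<longleftrightarrow> (\<forall>\<psi>. (\<forall>\<phi>. herm H \<psi> \<phi> = 0) \<longrightarrow> \<psi> = 0)"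

definition csubspace :: "(complex^'m) set \<Rightarrow> bool" where
  "csubspace S \<longleftrightarrow> 0 \<in> S \<and> (\<forall>x\<in>S. \<forall>y\<in>S. x + y \<in> S) \<and> (\<forall>(c::complex) x. x \<in> S \<longrightarrow> c *s x \<in> S)"

definition cindep :: "nat \<Rightarrow> (nat \<Rightarrow> complex^'m) \<Rightarrow> bool" where
  "cindep k f \<longleftrightarrow> (\<forall>c::nat \<Rightarrow> complex. (\<Sum>i<k. c i *s f i) = 0 \<longrightarrow> (\<forall>i<k. c i = 0))"

definition cdim :: "(complex^'m) set \<Rightarrow> nat" where
  "cdim S = Max {k. \<exists>f. (\<forall>i<k. f i \<in> S) \<and> cindep k f}"

definition pos_index :: "(complex^'m \<Rightarrow> complex^'m \<Rightarrow> complex) \<Rightarrow> (complex^'m) set \<Rightarrow> nat" where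
  "pos_index b W = Max {cdim U | U. csubspace U \<and> U \<subseteq> W \<and> (\<forall>x\<in>U. x \<noteq> 0 \<longrightarrow> Re (b x x) > 0)}"

definition neg_index :: "(complex^'m \<Rightarrow> complex^'m \<Rightarrow> complex) \<Rightarrow> (complex^'m) set \<Rightarrow> nat" where
  "neg_index b W = Max {cdim U | U. csubspace U \<and> U \<subseteq> W \<and> (\<forall>x\<in>U. x \<noteq> 0 \<longrightarrow> Re (b x x) < 0)}"

definition neutral_on :: "(complex^'m \<Rightarrow> complex^'m \<Rightarrow> complex) \<Rightarrow> (complex^'m) set \<Rightarrow> bool" where
  "neutral_on b W \<longleftrightarrow> pos_index b W = neg_index b W"

definition cl_mon :: "('v \<Rightarrow> complex^'m^'m) \<Rightarrow> 'v list \<Rightarrow> complex^'m^'m" where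
  "cl_mon \<gamma> vs = foldr (\<lambda>v A. \<gamma> v ** A) vs (mat 1)"

text \<open>Clifford representation: real-linear, with gamma(v)^2 = Q(v) (sign convention v^2 = +Q(v)).\<close>
definition clifford_rep :: "('v::real_vector \<Rightarrow> real) \<Rightarrow> ('v \<Rightarrow> complex^'m^'m) \<Rightarrow> bool" where
  "clifford_rep Q \<gamma> \<longleftrightarrow> linear \<gamma> \<and> (\<forall>v. \<gamma> v ** \<gamma> v = mat (complex_of_real (Q v)))"

definition irreducible_rep :: "('v \<Rightarrow> complex^'m^'m) \<Rightarrow> bool" where
  "irreducible_rep \<gamma> \<longleftrightarrow> (\<forall>S. csubspace S \<and> (\<forall>v. \<forall>x\<in>S. \<gamma> v *v x \<in> S) \<longrightarrow> S = {0} \<or> S = UNIV)"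

text \<open>c-compatibility (rho(a)psi,phi) = (psi, rho(a^x) phi) checked on all elements
c * v_1...v_k spanning Cl(V)_C, for which a^x = cnj(c) v_k ... v_1; by
(sesqui)additivity this is the condition on all of Cl(V)_C.\<close>
definition c_compatible :: "complex^'m^'m \<Rightarrow> ('v \<Rightarrow> complex^'m^'m) \<Rightarrow> bool" where
  "c_compatible H \<gamma> \<longleftrightarrow> (\<forall>(c::complex) vs \<psi> \<phi>.
      herm H ((mat c ** cl_mon \<gamma> vs) *v \<psi>) \<phi> = herm H \<psi> ((mat (cnj c) ** cl_mon \<gamma> (rev vs)) *v \<phi>))"

text \<open>Chirality operator chi = (-i)^(n/2+q) rho(e_1...e_n), q = n-1.\<close>
definition chirality :: "nat \<Rightarrow> (nat \<Rightarrow> 'v) \<Rightarrow> ('v \<Rightarrow> complex^'m^'m) \<Rightarrow> complex^'m^'m" where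
  "chirality n e \<gamma> = mat ((- \<i>) ^ (n div 2 + (n - 1))) ** cl_mon \<gamma> (map e [0..<n])"

end

theory Submission
  imports Defs
begin


lemma mat_vec: "mat c *v x = c *s (x::complex^'m)"
  by (simp add: vec_eq_iff mat_def matrix_vector_mult_def if_distrib if_distribR sum.delta' cong: if_cong)

lemma mat_mult_vec: "(mat c ** A) *v x = c *s (A *v (x::complex^'m))"
  by (simp add: matrix_vector_mul_assoc[symmetric] mat_vec)

lemma mat_mult_entry: "(mat c ** (A::complex^'m^'m)) $ i $ j = c * A $ i $ j"
proof -
  have "(mat c ** A) $ i $ j = (\<Sum>k\<in>UNIV. (if i = k then c else 0) * A $ k $ j)"
    by (simp add: matrix_matrix_mult_def mat_def)
  also have "\<dots> = (\<Sum>k\<in>UNIV. (if i = k then c * A $ k $ j else 0))"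
    by (rule sum.cong) auto
  also have "\<dots> = c * A $ i $ j" by simp
  finally show ?thesis .
qed

lemma mult_mat_entry: "((A::complex^'m^'m) ** mat c) $ i $ j = A $ i $ j * c"
proof -
  have "(A ** mat c) $ i $ j = (\<Sum>k\<in>UNIV. A $ i $ k * (if k = j then c else 0))"
    by (simp add: matrix_matrix_mult_def mat_def)
  also have "\<dots> = (\<Sum>k\<in>UNIV. (if k = j then A $ i $ k * c else 0))"
    by (rule sum.cong) auto
  also have "\<dots> = A $ i $ j * c" by simp
  finally show ?thesis .
qed

lemma mat_comm: "mat c ** (A::complex^'m^'m) = A ** mat c"
  by (simp add: vec_eq_iff mat_mult_entry mult_mat_entry mult.commute)

lemma mat_mul_mat: "mat a ** mat b = (mat (a*b) :: complex^'m^'m)"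
  by (simp add: vec_eq_iff mat_mult_entry) (simp add: mat_def)

lemma mat_add: "mat a + mat b = (mat (a+b) :: complex^'m^'m)"
  by (simp add: vec_eq_iff mat_def)

lemma mat_diff: "mat a - mat b = (mat (a-b) :: complex^'m^'m)"
  by (simp add: vec_eq_iff mat_def)

lemma mat_neg: "- mat a = (mat (-a) :: complex^'m^'m)"
  by (simp add: vec_eq_iff mat_def)

lemma matrix_add_rdistrib': "((A::complex^'m^'m) + B) ** C = A ** C + B ** C"
  by (simp add: vec_eq_iff matrix_matrix_mult_def sum.distrib distrib_right)

lemma matrix_neg_l: "(- (A::complex^'m^'m)) ** C = - (A ** C)"
  by (simp add: vec_eq_iff matrix_matrix_mult_def sum_negf)

lemma matrix_neg_r: "(A::complex^'m^'m) ** (- C) = - (A ** C)"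
  by (simp add: vec_eq_iff matrix_matrix_mult_def sum_negf)

lemma matrix_neg_v: "(- (A::complex^'m^'m)) *v x = - (A *v x)"
  by (simp add: vec_eq_iff matrix_vector_mult_def sum_negf)

lemma mat_mid: "(A::complex^'m^'m) ** (mat c ** B) = mat c ** (A ** B)"
  by (metis matrix_mul_assoc mat_comm)

lemma herm_scale_l: "herm H (c *s x) y = cnj c * herm H x y"
  by (simp add: herm_def sum_distrib_left mult.assoc)

lemma herm_scale_r: "herm H x (c *s y) = c * herm H x y"
  by (simp add: herm_def sum_distrib_left vector_scalar_commute mult_ac)

lemma cl_mon_Cons: "cl_mon g (v # vs) = g v ** cl_mon g vs"
  by (simp add: cl_mon_def)

lemma cl_mon_Nil: "cl_mon g [] = mat 1"
  by (simp add: cl_mon_def)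

lemma cl_mon_append: "cl_mon g (xs @ ys) = cl_mon g xs ** (cl_mon g ys :: complex^'m^'m)"
  by (induction xs) (simp_all add: cl_mon_def matrix_mul_assoc)




lemma Q_add:
  fixes B :: "'v::real_vector \<Rightarrow> 'v \<Rightarrow> real"
  assumes B_bil: "\<forall>x. linear (B x) \<and> linear (\<lambda>y. B y x)"
    and B_sym: "\<forall>x y. B x y = B y x"
    and Q_def: "\<forall>v. Q v = B v v"
  shows "Q (u + v) = Q u + Q v + 2 * B u (v::'v::real_vector)"
proof -
  have l1: "B (u+v) (u+v) = B u (u+v) + B v (u+v)"
    using B_bil linear_add[of "\<lambda>y. B y (u+v)"] by blast
  have l2: "B u (u+v) = B u u + B u v" using B_bil linear_add[of "B u"] by blast
  have l3: "B v (u+v) = B v u + B v v" using B_bil linear_add[of "B v"] by blast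
  show ?thesis using l1 l2 l3 Q_def B_sym[rule_format, of v u] by simp
qed

lemma anticomm:
  assumes rep: "clifford_rep Q \<gamma>"
    and B_bil: "\<forall>x. linear (B x) \<and> linear (\<lambda>y. B y x)"
    and B_sym: "\<forall>x y. B x y = B y x"
    and Q_def: "\<forall>v. Q v = B v v"
  shows "\<gamma> u ** \<gamma> v + \<gamma> v ** \<gamma> u = (mat (complex_of_real (2 * B u v)) :: complex^'m^'m)"
proof -
  have lin: "linear \<gamma>" and sq: "\<And>v. \<gamma> v ** \<gamma> v = mat (complex_of_real (Q v))"
    using rep by (auto simp: clifford_rep_def)
  have add: "\<gamma> (u + v) = \<gamma> u + \<gamma> v" using linear_add[OF lin] .
  have "(\<gamma> u + \<gamma> v) ** (\<gamma> u + \<gamma> v) = mat (complex_of_real (Q (u+v)))"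
    using sq[of "u+v"] add by simp
  hence "\<gamma> u ** \<gamma> u + \<gamma> v ** \<gamma> u + (\<gamma> u ** \<gamma> v + \<gamma> v ** \<gamma> v) = mat (complex_of_real (Q (u+v)))"
    by (simp add: matrix_add_ldistrib matrix_add_rdistrib')
  hence "mat (complex_of_real (Q u)) + \<gamma> v ** \<gamma> u + (\<gamma> u ** \<gamma> v + mat (complex_of_real (Q v))) = mat (complex_of_real (Q (u+v)))"
    by (simp add: sq)
  hence "\<gamma> u ** \<gamma> v + \<gamma> v ** \<gamma> u = mat (complex_of_real (Q (u+v))) - mat (complex_of_real (Q u)) - mat (complex_of_real (Q v))"
    by (simp add: algebra_simps)
  also have "\<dots> = mat (complex_of_real (2 * B u v))"
    by (simp add: mat_diff Q_add[OF B_bil B_sym Q_def])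
  finally show ?thesis .
qed

lemma anti0:
  assumes rep: "clifford_rep Q \<gamma>"
    and B_bil: "\<forall>x. linear (B x) \<and> linear (\<lambda>y. B y x)"
    and B_sym: "\<forall>x y. B x y = B y x"
    and Q_def: "\<forall>v. Q v = B v v"
    and "B u v = 0"
  shows "\<gamma> u ** \<gamma> v = - (\<gamma> v ** (\<gamma> u :: complex^'m^'m))"
  using anticomm[OF rep B_bil B_sym Q_def, of u v] assms(5)
  by (simp add: eq_neg_iff_add_eq_0)

lemma commute_mon:
  assumes "\<forall>v\<in>set vs. \<gamma> x ** \<gamma> v = - (\<gamma> v ** \<gamma> x)"
  shows "\<gamma> x ** cl_mon \<gamma> vs = mat ((-1)^length vs) ** (cl_mon \<gamma> vs ** (\<gamma> x :: complex^'m^'m))"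
  using assms
proof (induction vs)
  case Nil
  then show ?case by (simp add: cl_mon_Nil)
next
  case (Cons v vs)
  let ?M = "cl_mon \<gamma> vs"
  have "\<gamma> x ** cl_mon \<gamma> (v # vs) = (\<gamma> x ** \<gamma> v) ** ?M"
    by (simp add: cl_mon_Cons matrix_mul_assoc)
  also have "\<dots> = - (\<gamma> v ** (\<gamma> x ** ?M))"
    using Cons.prems by (simp add: matrix_neg_l matrix_mul_assoc)
  also have "\<dots> = - (\<gamma> v ** (mat ((-1)^length vs) ** (?M ** \<gamma> x)))"
    using Cons by simp
  also have "\<dots> = - (mat ((-1)^length vs) ** ((\<gamma> v ** ?M) ** \<gamma> x))"
    by (metis mat_mid matrix_mul_assoc)
  also have "\<dots> = (- mat ((-1)^length vs)) ** (cl_mon \<gamma> (v # vs) ** \<gamma> x)"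
    by (simp only: matrix_neg_l cl_mon_Cons)
  also have "\<dots> = mat ((-1)^length (v#vs)) ** (cl_mon \<gamma> (v # vs) ** \<gamma> x)"
    by (simp only: mat_neg) simp
  finally show ?case .
qed

lemma tri_step: "Suc k * k div 2 = k * (k - 1) div 2 + (k::nat)"
proof -
  have "Suc k * k = k * (k - 1) + 2 * k" by (cases k) (simp_all add: algebra_simps)
  thus ?thesis by simp
qed

lemma rev_mon:
  assumes "distinct vs"
    and "\<forall>a\<in>set vs. \<forall>b\<in>set vs. a \<noteq> b \<longrightarrow> \<gamma> a ** \<gamma> b = - (\<gamma> b ** \<gamma> a)"
  shows "cl_mon \<gamma> (rev vs) = mat ((-1)^(length vs * (length vs - 1) div 2)) ** (cl_mon \<gamma> vs :: complex^'m^'m)"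
  using assms
proof (induction vs rule: rev_induct)
  case Nil
  then show ?case by (simp add: cl_mon_Nil)
next
  case (snoc v vs)
  let ?M = "cl_mon \<gamma> vs"
  let ?k = "length vs"
  have IH: "cl_mon \<gamma> (rev vs) = mat ((-1)^(?k * (?k - 1) div 2)) ** ?M"
  proof (rule snoc.IH)
    show "distinct vs" using snoc.prems(1) by simp
    show "\<forall>a\<in>set vs. \<forall>b\<in>set vs. a \<noteq> b \<longrightarrow> \<gamma> a ** \<gamma> b = - (\<gamma> b ** \<gamma> a)"
      using snoc.prems(2) unfolding set_append by blast
  qed
  have vn: "v \<notin> set vs" using snoc.prems(1) by simp
  have com: "\<gamma> v ** ?M = mat ((-1)^?k) ** (?M ** \<gamma> v)"
  proof (rule commute_mon)
    show "\<forall>x\<in>set vs. \<gamma> v ** \<gamma> x = - (\<gamma> x ** \<gamma> v)"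
      using snoc.prems(2) vn unfolding set_append by fastforce
  qed
  have "cl_mon \<gamma> (rev (vs @ [v])) = \<gamma> v ** cl_mon \<gamma> (rev vs)"
    by (simp add: cl_mon_Cons)
  also have "\<dots> = mat ((-1)^(?k * (?k - 1) div 2)) ** (mat ((-1)^?k) ** (?M ** \<gamma> v))"
    by (simp only: IH mat_mid[of "\<gamma> v"] com)
  also have "\<dots> = mat ((-1)^(?k * (?k - 1) div 2 + ?k)) ** cl_mon \<gamma> (vs @ [v])"
    by (simp add: matrix_mul_assoc[symmetric] mat_mul_mat[symmetric] power_add cl_mon_append cl_mon_Cons cl_mon_Nil)
  also have "?k * (?k - 1) div 2 + ?k = length (vs @ [v]) * (length (vs @ [v]) - 1) div 2"
    using tri_step[of ?k] by simp
  finally show ?case .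
qed




locale cl =
  fixes n :: nat
    and B :: "'v::real_vector \<Rightarrow> 'v \<Rightarrow> real"
    and Q :: "'v \<Rightarrow> real"
    and e :: "nat \<Rightarrow> 'v"
    and \<gamma> :: "'v \<Rightarrow> complex^'m^'m"
    and H :: "complex^'m^'m"
  assumes even_n: "even n"
    and B_bil: "\<forall>x. linear (B x) \<and> linear (\<lambda>y. B y x)"
    and B_sym: "\<forall>x y. B x y = B y x"
    and Q_def: "\<forall>v. Q v = B v v"
    and e_basis: "inj_on e {..<n} \<and> independent (e ` {..<n}) \<and> span (e ` {..<n}) = UNIV"
    and e_orth: "\<forall>i<n. \<forall>j<n. i \<noteq> j \<longrightarrow> B (e i) (e j) = 0"
    and e_norm: "\<forall>i<n. Q (e i) = 1 \<or> Q (e i) = -1"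
    and signature: "card {i. i < n \<and> Q (e i) = 1} = 1"
    and rep: "clifford_rep Q \<gamma>"
    and compat: "c_compatible H \<gamma>"
begin

lemma lin: "linear \<gamma>" using rep by (simp add: clifford_rep_def)

lemma sq: "\<gamma> v ** \<gamma> v = mat (complex_of_real (Q v))"
  using rep by (simp add: clifford_rep_def)

lemma anti: "B u v = 0 \<Longrightarrow> \<gamma> u ** \<gamma> v = - (\<gamma> v ** \<gamma> u)"
  by (rule anti0[OF rep B_bil B_sym Q_def])

lemma anti_e: "i < n \<Longrightarrow> j < n \<Longrightarrow> i \<noteq> j \<Longrightarrow> \<gamma> (e i) ** \<gamma> (e j) = - (\<gamma> (e j) ** \<gamma> (e i))"
  using e_orth anti by blast

lemma n_ge2: "n \<ge> 2"
proof -
  have "n \<noteq> 0" using signature by (intro notI) simp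
  thus ?thesis using even_n by presburger
qed

lemma mat_scaleR_pow: "mat ((-1::complex)^k) ** A = ((-1::real)^k) *\<^sub>R (A::complex^'m^'m)"
proof -
  have "(-1::complex)^k = complex_of_real ((-1)^k)" by simp
  thus ?thesis
    unfolding vec_eq_iff by (simp only: mat_mult_entry vector_scaleR_component) (simp add: scaleR_conv_of_real)
qed

definition omega where "omega = cl_mon \<gamma> (map e [0..<n])"

lemma omega_anti_e:
  assumes j: "j < n"
  shows "\<gamma> (e j) ** omega = - (omega ** \<gamma> (e j))"
proof -
  let ?A = "cl_mon \<gamma> (map e [0..<j])"
  let ?C = "cl_mon \<gamma> (map e [Suc j..<n])"
  let ?g = "\<gamma> (e j)"
  have split: "[0..<n] = [0..<j] @ j # [Suc j..<n]"
    using j upt_add_eq_append[of 0 j "n - j"] upt_conv_Cons[of j n] by simp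
  have om: "omega = ?A ** (?g ** ?C)"
    by (simp add: omega_def split cl_mon_append cl_mon_Cons)
  have cA: "?g ** ?A = mat ((-1)^j) ** (?A ** ?g)"
  proof -
    have "?g ** ?A = mat ((-1)^length (map e [0..<j])) ** (?A ** ?g)"
      by (rule commute_mon) (use j in \<open>auto intro!: anti_e\<close>)
    thus ?thesis by simp
  qed
  have cC: "?g ** ?C = mat ((-1)^(n - Suc j)) ** (?C ** ?g)"
  proof -
    have "?g ** ?C = mat ((-1)^length (map e [Suc j..<n])) ** (?C ** ?g)"
      by (rule commute_mon) (use j in \<open>auto intro!: anti_e\<close>)
    thus ?thesis by simp
  qed
  have sgn: "(-1::real)^j * (-1)^(n - Suc j) = -1"
  proof -
    have "(-1::real)^j * (-1)^(n - Suc j) = (-1)^(j + (n - Suc j))" by (simp add: power_add)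
    also have "j + (n - Suc j) = n - 1" using j by simp
    also have "odd (n - 1)" using even_n n_ge2 by presburger
    hence "(-1::real)^(n - 1) = -1" by simp
    finally show ?thesis .
  qed
  have cA': "?g ** ?A = ((-1::real)^j) *\<^sub>R (?A ** ?g)"
    using cA by (simp add: mat_scaleR_pow)
  have cC': "?g ** ?C = ((-1::real)^(n - Suc j)) *\<^sub>R (?C ** ?g)"
    using cC by (simp add: mat_scaleR_pow)
  have "?g ** omega = (?g ** ?A) ** (?g ** ?C)"
    by (simp only: om matrix_mul_assoc)
  also have "\<dots> = ((-1::real)^j) *\<^sub>R (?A ** (?g ** (?g ** ?C)))"
    by (simp only: cA' scalar_matrix_assoc[symmetric] matrix_mul_assoc)
  also have "\<dots> = ((-1::real)^j) *\<^sub>R (?A ** (?g ** (((-1::real)^(n - Suc j)) *\<^sub>R (?C ** ?g))))"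
    by (simp only: cC')
  also have "\<dots> = ((-1::real)^j * (-1)^(n - Suc j)) *\<^sub>R ((?A ** (?g ** ?C)) ** ?g)"
    by (simp only: matrix_scalar_ac scalar_matrix_assoc[symmetric] scaleR_scaleR matrix_mul_assoc)
  also have "\<dots> = - (omega ** ?g)"
    by (simp only: sgn om scaleR_minus1_left)
  finally show ?thesis .
qed

lemma omega_anti: "\<gamma> x ** omega = - (omega ** \<gamma> x)"
proof -
  have x: "x \<in> span (e ` {..<n})" using e_basis by simp
  show ?thesis
  proof (induction rule: span_induct[OF x])
    case 1
    show ?case
    proof (rule subspaceI)
      show "0 \<in> {x. \<gamma> x ** omega = - (omega ** \<gamma> x)}"
        by (simp add: linear_0[OF lin])
      fix a b assume "a \<in> {x. \<gamma> x ** omega = - (omega ** \<gamma> x)}" "b \<in> {x. \<gamma> x ** omega = - (omega ** \<gamma> x)}"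
      thus "a + b \<in> {x. \<gamma> x ** omega = - (omega ** \<gamma> x)}"
        by (simp add: linear_add[OF lin] matrix_add_rdistrib' matrix_add_ldistrib)
    next
      fix c :: real and a assume "a \<in> {x. \<gamma> x ** omega = - (omega ** \<gamma> x)}"
      thus "c *\<^sub>R a \<in> {x. \<gamma> x ** omega = - (omega ** \<gamma> x)}"
        by (simp add: linear_scale[OF lin] scalar_matrix_assoc[symmetric] matrix_scalar_ac)
    qed
  next
    case (2 x)
    then obtain j where "j < n" "x = e j" by auto
    thus ?case using omega_anti_e by simp
  qed
qed

end



context cl begin

abbreviation "cc \<equiv> (- \<i>) ^ (n div 2 + (n - 1))"

lemma chi_eq: "chirality n e \<gamma> = mat cc ** omega"
  by (simp add: chirality_def omega_def)

lemma chi_anti: "\<gamma> x ** chirality n e \<gamma> = - (chirality n e \<gamma> ** \<gamma> x)"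
proof -
  have "\<gamma> x ** (mat cc ** omega) = mat cc ** (\<gamma> x ** omega)" by (rule mat_mid)
  also have "\<dots> = - ((mat cc ** omega) ** \<gamma> x)"
    by (simp only: omega_anti matrix_neg_r matrix_mul_assoc)
  finally show ?thesis by (simp only: chi_eq)
qed

lemma chi_vec': "chirality n e \<gamma> *v (\<gamma> x *v \<phi>) = - (\<gamma> x *v (chirality n e \<gamma> *v \<phi>))"
proof -
  have "chirality n e \<gamma> *v (\<gamma> x *v \<phi>) = (chirality n e \<gamma> ** \<gamma> x) *v \<phi>"
    by (simp add: matrix_vector_mul_assoc)
  also have "\<dots> = (- (\<gamma> x ** chirality n e \<gamma>)) *v \<phi>"
    by (simp add: chi_anti)
  also have "\<dots> = - (\<gamma> x *v (chirality n e \<gamma> *v \<phi>))"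
    by (simp add: matrix_neg_v matrix_vector_mul_assoc)
  finally show ?thesis .
qed

lemma herm_mon: "herm H (cl_mon \<gamma> vs *v \<psi>) \<phi> = herm H \<psi> (cl_mon \<gamma> (rev vs) *v \<phi>)"
  using compat unfolding c_compatible_def
  by (metis complex_cnj_one matrix_mul_lid)

lemma omega_rev: "cl_mon \<gamma> (rev (map e [0..<n])) = mat ((-1)^(n * (n - 1) div 2)) ** omega"
proof -
  have d: "distinct (map e [0..<n])"
    using e_basis by (simp add: distinct_map inj_on_def lessThan_def)
  have a: "\<forall>a\<in>set (map e [0..<n]). \<forall>b\<in>set (map e [0..<n]). a \<noteq> b \<longrightarrow> \<gamma> a ** \<gamma> b = - (\<gamma> b ** \<gamma> a)"
  proof (intro ballI impI)
    fix a b assume "a \<in> set (map e [0..<n])" "b \<in> set (map e [0..<n])" "a \<noteq> b"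
    then obtain i j where ij: "i < n" "j < n" "a = e i" "b = e j" by auto
    moreover have "i \<noteq> j" using ij \<open>a \<noteq> b\<close> by auto
    ultimately show "\<gamma> a ** \<gamma> b = - (\<gamma> b ** \<gamma> a)" using anti_e by blast
  qed
  show ?thesis using rev_mon[OF d a] by (simp add: omega_def)
qed

lemma sign_fact: "cnj cc * (-1)^(n * (n - 1) div 2) = - cc"
proof -
  obtain m where nm: "n = 2 * m" using even_n by (rule evenE)
  have "m \<noteq> 0" using nm n_ge2 by simp
  then obtain l where "m = Suc l" using not0_implies_Suc by blast
  hence nl: "n = 2 * Suc l" using nm by simp
  have k: "n div 2 + (n - 1) = 3 * l + 2" using nl by simp
  have p: "n * (n - 1) div 2 = Suc l * (2 * l + 1)" using nl by simp
  have odd: "odd (3 * l + 2 + Suc l * (2 * l + 1))"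
  proof -
    have "3 * l + 2 + Suc l * (2 * l + 1) = 2 * (l * l + 3 * l + 1) + 1" by (simp add: algebra_simps)
    thus ?thesis by simp
  qed
  have m: "(- \<i>) ^ q = (-1)^q * \<i> ^ q" for q by (rule power_minus)
  have "cnj cc * (-1)^(n * (n - 1) div 2) = \<i> ^ (3*l+2) * (-1) ^ (Suc l * (2 * l + 1))"
    by (simp only: k p complex_cnj_power complex_cnj_minus complex_cnj_i minus_minus)
  also have "\<dots> = - ((-1)^(3*l+2) * \<i> ^ (3*l+2))"
  proof -
    have "(-1::complex) ^ (Suc l * (2 * l + 1)) = - ((-1)^(3*l+2))"
    proof -
      have "(-1::complex) ^ (3 * l + 2 + Suc l * (2 * l + 1)) = -1" using odd by simp
      hence "(-1::complex)^(3*l+2) * (-1) ^ (Suc l * (2 * l + 1)) = -1" by (simp add: power_add)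
      moreover have "(-1::complex)^(3*l+2) * (-1)^(3*l+2) = 1" by (simp add: power_add[symmetric])
      ultimately show ?thesis by (metis minus_mult_right mult.left_neutral mult.assoc mult_minus1)
    qed
    thus ?thesis by simp
  qed
  also have "\<dots> = - cc" by (simp only: k m)
  finally show ?thesis .
qed

lemma chi_adj: "herm H (chirality n e \<gamma> *v \<psi>) \<phi> = - herm H \<psi> (chirality n e \<gamma> *v \<phi>)"
proof -
  have "herm H (chirality n e \<gamma> *v \<psi>) \<phi> = cnj cc * herm H (omega *v \<psi>) \<phi>"
    by (simp add: chi_eq mat_mult_vec herm_scale_l)
  also have "\<dots> = cnj cc * herm H \<psi> ((mat ((-1)^(n * (n - 1) div 2)) ** omega) *v \<phi>)"
    by (simp add: omega_def herm_mon omega_rev[unfolded omega_def])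
  also have "\<dots> = (cnj cc * (-1)^(n * (n - 1) div 2)) * herm H \<psi> (omega *v \<phi>)"
    by (simp add: mat_mult_vec herm_scale_r)
  also have "\<dots> = - cc * herm H \<psi> (omega *v \<phi>)"
    by (simp only: sign_fact)
  also have "\<dots> = - herm H \<psi> (chirality n e \<gamma> *v \<phi>)"
    by (simp add: chi_eq mat_mult_vec herm_scale_r)
  finally show ?thesis .
qed

lemma isotropic:
  assumes "chirality n e \<gamma> *v \<psi> = s *s \<psi>" "chirality n e \<gamma> *v \<phi> = s *s \<phi>" "s = 1 \<or> s = -1"
  shows "herm H \<psi> \<phi> = 0"
proof -
  have "s * herm H \<psi> \<phi> = - (s * herm H \<psi> \<phi>)"
    using chi_adj[of \<psi> \<phi>] assms by (auto simp: herm_scale_l herm_scale_r)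
  thus ?thesis using assms(3) by auto
qed

end



lemma mat_scaleR: "mat (complex_of_real r) ** A = r *\<^sub>R (A::complex^'m^'m)"
  unfolding vec_eq_iff by (simp only: mat_mult_entry vector_scaleR_component) (simp add: scaleR_conv_of_real)

lemma mv_neg: "A *v (- x) = - (A *v (x::complex^'m))"
  by (simp add: vec_eq_iff matrix_vector_mult_def sum_negf)

lemma av_sum: "(a::complex^'m^'m) *v (\<Sum>i<(k::nat). c i *s f i) = (\<Sum>i<k. c i *s (a *v f i))"
  by (induction k) (simp_all add: matrix_vector_right_distrib vector_scalar_commute)

lemma cindep_cong: "(\<And>i. i < k \<Longrightarrow> f i = g i) \<Longrightarrow> cindep k f = cindep k g"
proof -
  assume fg: "\<And>i. i < k \<Longrightarrow> f i = g i"
  have "(\<Sum>i<k. c i *s f i) = (\<Sum>i<k. c i *s g i)" for c by (rule sum.cong) (auto simp: fg)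
  thus ?thesis unfolding cindep_def by simp
qed

lemma cindep_image:
  assumes inj: "\<And>x. (a::complex^'m^'m) *v x = 0 \<Longrightarrow> x = 0"
  shows "cindep k (\<lambda>i. a *v f i) = cindep k f"
proof -
  have "(\<Sum>i<k. c i *s (a *v f i)) = 0 \<longleftrightarrow> (\<Sum>i<k. c i *s f i) = 0" for c
  proof -
    have eq: "(\<Sum>i<k. c i *s (a *v f i)) = a *v (\<Sum>i<k. c i *s f i)" by (rule av_sum[symmetric])
    show ?thesis unfolding eq using inj[of "\<Sum>i<k. c i *s f i"] by auto
  qed
  thus ?thesis unfolding cindep_def by simp
qed

lemma cdim_image:
  assumes inj: "\<And>x. (a::complex^'m^'m) *v x = 0 \<Longrightarrow> x = 0"
  shows "cdim ((\<lambda>x. a *v x) ` U) = cdim U"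
proof -
  have "{k. \<exists>f. (\<forall>i<k. f i \<in> (\<lambda>x. a *v x) ` U) \<and> cindep k f} = {k. \<exists>f. (\<forall>i<k. f i \<in> U) \<and> cindep k f}"
  proof (intro set_eqI iffI; simp only: mem_Collect_eq)
    fix k assume "\<exists>g. (\<forall>i<k. g i \<in> (\<lambda>x. a *v x) ` U) \<and> cindep k g"
    then obtain g where g: "\<forall>i<k. g i \<in> (\<lambda>x. a *v x) ` U" "cindep k g" by blast
    define f where "f i = (SOME x. x \<in> U \<and> g i = a *v x)" for i
    have f: "f i \<in> U \<and> g i = a *v f i" if "i < k" for i
    proof -
      have "\<exists>x. x \<in> U \<and> g i = a *v x" using g(1) that by blast
      thus ?thesis unfolding f_def by (rule someI_ex)
    qed
    have "cindep k (\<lambda>i. a *v f i)" using g(2) cindep_cong[of k g "\<lambda>i. a *v f i"] f by simp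
    hence "cindep k f" using cindep_image[OF inj] by simp
    thus "\<exists>f. (\<forall>i<k. f i \<in> U) \<and> cindep k f" using f by blast
  next
    fix k assume "\<exists>f. (\<forall>i<k. f i \<in> U) \<and> cindep k f"
    then obtain f where f: "\<forall>i<k. f i \<in> U" "cindep k f" by blast
    hence "cindep k (\<lambda>i. a *v f i)" using cindep_image[OF inj] by simp
    thus "\<exists>g. (\<forall>i<k. g i \<in> (\<lambda>x. a *v x) ` U) \<and> cindep k g"
      by (intro exI[of _ "\<lambda>i. a *v f i"]) (use f(1) in auto)
  qed
  thus ?thesis unfolding cdim_def by simp
qed

lemma csubspace_image:
  assumes "csubspace U"
  shows "csubspace ((\<lambda>x. (a::complex^'m^'m) *v x) ` U)"
proof -
  have U: "0 \<in> U" "\<And>x y. x \<in> U \<Longrightarrow> y \<in> U \<Longrightarrow> x + y \<in> U" "\<And>c x. x \<in> U \<Longrightarrow> c *s x \<in> U"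
    using assms unfolding csubspace_def by auto
  show ?thesis unfolding csubspace_def
  proof (intro conjI ballI allI impI)
    show "0 \<in> (\<lambda>x. a *v x) ` U" using U(1) by (intro rev_image_eqI[of 0]) auto
  next
    fix x y assume "x \<in> (\<lambda>x. a *v x) ` U" "y \<in> (\<lambda>x. a *v x) ` U"
    then obtain x' y' where "x' \<in> U" "y' \<in> U" "x = a *v x'" "y = a *v y'" by blast
    thus "x + y \<in> (\<lambda>x. a *v x) ` U"
      using U(2) by (intro rev_image_eqI[of "x' + y'"]) (auto simp: matrix_vector_right_distrib)
  next
    fix c x assume "x \<in> (\<lambda>x. a *v x) ` U"
    then obtain x' where "x' \<in> U" "x = a *v x'" by blast
    thus "c *s x \<in> (\<lambda>x. a *v x) ` U"
      using U(3) by (intro rev_image_eqI[of "c *s x'"]) (auto simp: vector_scalar_commute)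
  qed
qed

lemma index_sub:
  fixes a :: "complex^'m^'m" and b :: "complex^'m \<Rightarrow> complex^'m \<Rightarrow> complex"
  assumes W: "\<forall>x\<in>W. a *v x \<in> W" and inj: "\<And>x. a *v x = 0 \<Longrightarrow> x = 0"
    and flip: "\<And>x. b (a *v x) (a *v x) = complex_of_real r * b x x" and r: "r < 0"
  shows "{cdim U |U. csubspace U \<and> U \<subseteq> W \<and> (\<forall>x\<in>U. x \<noteq> 0 \<longrightarrow> s * Re (b x x) > 0)}
       \<subseteq> {cdim U |U. csubspace U \<and> U \<subseteq> W \<and> (\<forall>x\<in>U. x \<noteq> 0 \<longrightarrow> s * Re (b x x) < 0)}"
proof
  fix d assume "d \<in> {cdim U |U. csubspace U \<and> U \<subseteq> W \<and> (\<forall>x\<in>U. x \<noteq> 0 \<longrightarrow> s * Re (b x x) > 0)}"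
  then obtain U where U: "d = cdim U" "csubspace U" "U \<subseteq> W" "\<forall>x\<in>U. x \<noteq> 0 \<longrightarrow> s * Re (b x x) > 0"
    by blast
  let ?V = "(\<lambda>x. a *v x) ` U"
  have "csubspace ?V" using csubspace_image[OF U(2)] .
  moreover have "?V \<subseteq> W" using U(3) W by auto
  moreover have "\<forall>y\<in>?V. y \<noteq> 0 \<longrightarrow> s * Re (b y y) < 0"
  proof (intro ballI impI)
    fix y assume "y \<in> ?V" "y \<noteq> 0"
    then obtain x where x: "x \<in> U" "y = a *v x" by blast
    have "x \<noteq> 0" using x \<open>y \<noteq> 0\<close> by auto
    hence p: "s * Re (b x x) > 0" using U(4) x by blast
    have "Re (b y y) = r * Re (b x x)" using x flip by simp
    hence eq: "s * Re (b y y) = r * (s * Re (b x x))" by simp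
    show "s * Re (b y y) < 0" unfolding eq by (rule mult_neg_pos[OF r p])
  qed
  moreover have "cdim ?V = d" using cdim_image[OF inj] U(1) by simp
  ultimately show "d \<in> {cdim U |U. csubspace U \<and> U \<subseteq> W \<and> (\<forall>x\<in>U. x \<noteq> 0 \<longrightarrow> s * Re (b x x) < 0)}"
    by blast
qed

lemma index_eq:
  fixes a :: "complex^'m^'m" and b :: "complex^'m \<Rightarrow> complex^'m \<Rightarrow> complex"
  assumes W: "\<forall>x\<in>W. a *v x \<in> W" and inj: "\<And>x. a *v x = 0 \<Longrightarrow> x = 0"
    and flip: "\<And>x. b (a *v x) (a *v x) = complex_of_real r * b x x" and r: "r < 0"
  shows "neutral_on b W"
proof -
  have 1: "{cdim U |U. csubspace U \<and> U \<subseteq> W \<and> (\<forall>x\<in>U. x \<noteq> 0 \<longrightarrow> 1 * Re (b x x) > 0)}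
       \<subseteq> {cdim U |U. csubspace U \<and> U \<subseteq> W \<and> (\<forall>x\<in>U. x \<noteq> 0 \<longrightarrow> 1 * Re (b x x) < 0)}"
    by (rule index_sub[where W=W and a=a and b=b and r=r and s=1, OF W inj flip r])
  have 2: "{cdim U |U. csubspace U \<and> U \<subseteq> W \<and> (\<forall>x\<in>U. x \<noteq> 0 \<longrightarrow> (-1) * Re (b x x) > 0)}
       \<subseteq> {cdim U |U. csubspace U \<and> U \<subseteq> W \<and> (\<forall>x\<in>U. x \<noteq> 0 \<longrightarrow> (-1) * Re (b x x) < 0)}"
    by (rule index_sub[where W=W and a=a and b=b and r=r and s="-1", OF W inj flip r])
  have "{cdim U |U. csubspace U \<and> U \<subseteq> W \<and> (\<forall>x\<in>U. x \<noteq> 0 \<longrightarrow> Re (b x x) > 0)}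
      = {cdim U |U. csubspace U \<and> U \<subseteq> W \<and> (\<forall>x\<in>U. x \<noteq> 0 \<longrightarrow> Re (b x x) < 0)}"
    using 1 2 by simp
  thus ?thesis unfolding neutral_on_def pos_index_def neg_index_def by simp
qed




context cl begin

lemma exists_u:
  assumes n2: "n > 2"
  shows "\<exists>u. B u w = 0 \<and> Q u < 0"
proof -
  let ?S = "{i. i < n \<and> Q (e i) = 1}"
  let ?T = "{..<n} - ?S"
  have sub: "?S \<subseteq> {..<n}" by auto
  have cT: "card ?T = n - 1"
    using card_Diff_subset[OF finite_subset[OF sub finite_lessThan] sub] signature by simp
  hence "card ?T > 0" using n2 by simp
  then obtain j where j: "j \<in> ?T" by (metis card_gt_0_iff ex_in_conv)
  have "card (?T - {j}) = n - 2" using cT j by simp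
  hence "card (?T - {j}) > 0" using n2 by simp
  then obtain k where k: "k \<in> ?T - {j}" by (metis card_gt_0_iff ex_in_conv)
  have jn: "j < n" and kn: "k < n" and jk: "j \<noteq> k" using j k by auto
  have Qj: "Q (e j) = -1" using j e_norm by auto
  have Qk: "Q (e k) = -1" using k e_norm by auto
  have Bjj: "B (e j) (e j) = -1" using Qj Q_def by simp
  have Bkk: "B (e k) (e k) = -1" using Qk Q_def by simp
  have Bjk: "B (e j) (e k) = 0" and Bkj: "B (e k) (e j) = 0" using e_orth jn kn jk by auto
  have linl: "linear (\<lambda>y. B y x)" for x using B_bil by simp
  have linr: "linear (B x)" for x using B_bil by simp
  define \<alpha> where "\<alpha> = B (e k) w"
  define \<beta> where "\<beta> = - B (e j) w"
  show ?thesis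
  proof (cases "\<alpha> = 0 \<and> \<beta> = 0")
    case True
    hence "B (e j) w = 0" by (simp add: \<beta>_def)
    thus ?thesis using Qj by (intro exI[of _ "e j"]) simp
  next
    case False
    define u where "u = \<alpha> *\<^sub>R e j + \<beta> *\<^sub>R e k"
    have "B u w = \<alpha> * B (e j) w + \<beta> * B (e k) w"
      unfolding u_def using linear_add[OF linl[of w]] linear_scale[OF linl[of w]] by simp
    also have "\<dots> = 0" by (simp add: \<alpha>_def \<beta>_def)
    finally have 1: "B u w = 0" .
    have uj: "B (e j) u = - \<alpha>"
      unfolding u_def using linear_add[OF linr[of "e j"]] linear_scale[OF linr[of "e j"]] Bjj Bjk by simp
    have uk: "B (e k) u = - \<beta>"
      unfolding u_def using linear_add[OF linr[of "e k"]] linear_scale[OF linr[of "e k"]] Bkk Bkj by simp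
    have "Q u = \<alpha> * B (e j) u + \<beta> * B (e k) u"
      unfolding Q_def[rule_format] by (subst (1) u_def) (simp add: linear_add[OF linl[of u]] linear_scale[OF linl[of u]])
    also have "\<dots> = - (\<alpha>\<^sup>2 + \<beta>\<^sup>2)" by (simp add: uj uk power2_eq_square)
    finally have "Q u = - (\<alpha>\<^sup>2 + \<beta>\<^sup>2)" .
    moreover have "\<alpha>\<^sup>2 + \<beta>\<^sup>2 > 0" using False by (simp add: sum_power2_gt_zero_iff)
    ultimately show ?thesis using 1 by (intro exI[of _ u]) simp
  qed
qed

lemma sqR: "\<gamma> v ** \<gamma> v = Q v *\<^sub>R mat 1"
  using sq[of v] mat_scaleR[of "Q v" "mat 1"] by simp

end



context cl begin

lemma main:
  assumes spacelike: "Q w < 0"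
  shows "(let chi = chirality n e \<gamma>;
             KL = {\<psi>. chi *v \<psi> = - \<psi>};
             KR = {\<psi>. chi *v \<psi> = \<psi>};
             hw = (\<lambda>\<psi> \<phi>. herm H \<psi> (\<gamma> w *v \<phi>))
         in (\<forall>\<psi>\<in>KL. \<forall>\<phi>\<in>KR. hw \<psi> \<phi> = 0 \<and> hw \<phi> \<psi> = 0)
            \<and> (n > 2 \<longrightarrow> neutral_on hw KL \<and> neutral_on hw KR))"
proof -
  let ?ch = "chirality n e \<gamma>"
  let ?hw = "\<lambda>\<psi> \<phi>. herm H \<psi> (\<gamma> w *v \<phi>)"
  let ?KL = "{\<psi>. ?ch *v \<psi> = - \<psi>}"
  let ?KR = "{\<psi>. ?ch *v \<psi> = \<psi>}"
  have orth: "\<forall>\<psi>\<in>?KL. \<forall>\<phi>\<in>?KR. ?hw \<psi> \<phi> = 0 \<and> ?hw \<phi> \<psi> = 0"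
  proof (intro ballI conjI)
    fix \<psi> \<phi> assume p: "\<psi> \<in> ?KL" and f: "\<phi> \<in> ?KR"
    have p': "?ch *v \<psi> = (-1) *s \<psi>" using p by (simp add: vector_sneg_minus1[symmetric])
    have f': "?ch *v \<phi> = 1 *s \<phi>" using f by simp
    have "?ch *v (\<gamma> w *v \<phi>) = (-1) *s (\<gamma> w *v \<phi>)"
      using f by (simp add: chi_vec' vector_sneg_minus1[symmetric])
    thus "?hw \<psi> \<phi> = 0" using isotropic[OF p'] by simp
    have "?ch *v (\<gamma> w *v \<psi>) = 1 *s (\<gamma> w *v \<psi>)"
      using p by (simp add: chi_vec' mv_neg)
    thus "?hw \<phi> \<psi> = 0" using isotropic[OF f'] by simp
  qed
  have neut: "neutral_on ?hw ?KL \<and> neutral_on ?hw ?KR" if n2: "n > 2"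
  proof -
    obtain u where u: "B u w = 0" "Q u < 0" using exists_u[OF n2] by blast
    have uw: "\<gamma> u ** \<gamma> w = - (\<gamma> w ** \<gamma> u)" using anti[OF u(1)] .
    define a where "a = \<gamma> w ** \<gamma> u"
    define r where "r = - (Q w * Q u)"
    have r: "r < 0" unfolding r_def using spacelike u(2) by (simp add: mult_neg_neg)
    have av: "a *v x = \<gamma> w *v (\<gamma> u *v x)" for x by (simp add: a_def matrix_vector_mul_assoc)
    have cha: "?ch *v (a *v x) = a *v (?ch *v x)" for x
      by (simp only: av chi_vec' mv_neg minus_minus)
    have aa: "a ** a = r *\<^sub>R mat 1"
    proof -
      have "a ** a = \<gamma> w ** ((\<gamma> u ** \<gamma> w) ** \<gamma> u)" by (simp only: a_def matrix_mul_assoc)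
      also have "\<dots> = - ((\<gamma> w ** \<gamma> w) ** (\<gamma> u ** \<gamma> u))"
        by (simp only: uw matrix_neg_l matrix_neg_r matrix_mul_assoc)
      also have "\<dots> = r *\<^sub>R mat 1"
        by (simp add: sqR r_def matrix_scalar_ac scalar_matrix_assoc[symmetric])
      finally show ?thesis .
    qed
    have inj: "x = 0" if "a *v x = 0" for x
    proof -
      have "(a ** a) *v x = 0" using that by (simp add: matrix_vector_mul_assoc[symmetric])
      moreover have "(a ** a) *v x = complex_of_real r *s x"
        by (simp only: aa mat_scaleR[symmetric] mat_mult_vec matrix_vector_mul_lid)
      ultimately have "complex_of_real r *s x = 0" by simp
      thus ?thesis using r by simp
    qed
    have M: "(\<gamma> u ** \<gamma> w) ** (\<gamma> w ** (\<gamma> w ** \<gamma> u)) = r *\<^sub>R \<gamma> w"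
    proof -
      have "(\<gamma> u ** \<gamma> w) ** (\<gamma> w ** (\<gamma> w ** \<gamma> u)) = (\<gamma> u ** \<gamma> w) ** ((\<gamma> w ** \<gamma> w) ** \<gamma> u)"
        by (simp only: matrix_mul_assoc)
      also have "\<dots> = Q w *\<^sub>R - ((\<gamma> w ** \<gamma> u) ** \<gamma> u)"
        by (simp only: sqR uw matrix_neg_l matrix_neg_r matrix_mul_assoc scalar_matrix_assoc[symmetric] matrix_scalar_ac matrix_mul_rid)
      also have "\<dots> = Q w *\<^sub>R - (\<gamma> w ** (\<gamma> u ** \<gamma> u))"
        by (simp only: matrix_mul_assoc)
      also have "\<dots> = r *\<^sub>R \<gamma> w"
        by (simp add: sqR r_def matrix_scalar_ac)
      finally show ?thesis .
    qed
    have flip: "?hw (a *v x) (a *v x) = complex_of_real r * ?hw x x" for x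
    proof -
      have am: "a = cl_mon \<gamma> [w, u]" by (simp add: a_def cl_mon_Cons cl_mon_Nil)
      have "?hw (a *v x) (a *v x) = herm H x (cl_mon \<gamma> [u, w] *v (\<gamma> w *v (a *v x)))"
        by (simp only: am herm_mon rev.simps append.simps)
      also have "\<dots> = herm H x (((\<gamma> u ** \<gamma> w) ** (\<gamma> w ** (\<gamma> w ** \<gamma> u))) *v x)"
        by (simp add: cl_mon_Cons cl_mon_Nil a_def matrix_vector_mul_assoc)
      also have "\<dots> = herm H x ((mat (complex_of_real r) ** \<gamma> w) *v x)"
        by (simp only: M mat_scaleR)
      also have "\<dots> = complex_of_real r * ?hw x x"
        by (simp only: mat_mult_vec herm_scale_r)
      finally show ?thesis .
    qed
    have WL: "\<forall>x\<in>?KL. a *v x \<in> ?KL" by (simp add: cha mv_neg)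
    have WR: "\<forall>x\<in>?KR. a *v x \<in> ?KR" by (simp add: cha)
    show ?thesis
      using index_eq[where b="?hw", OF WL inj flip r] index_eq[where b="?hw", OF WR inj flip r] by blast
  qed
  show ?thesis unfolding Let_def using orth neut by blast
qed

end


theorem lemma7:
  fixes n :: nat
    and B :: "'v::real_vector \<Rightarrow> 'v \<Rightarrow> real"
    and Q :: "'v \<Rightarrow> real"
    and e :: "nat \<Rightarrow> 'v"
    and \<gamma> :: "'v \<Rightarrow> complex^'m^'m"
    and H :: "complex^'m^'m"
    and w :: 'v
  assumes even_n: "even n"
    and B_bil: "\<forall>x. linear (B x) \<and> linear (\<lambda>y. B y x)"
    and B_sym: "\<forall>x y. B x y = B y x"
    and Q_def: "\<forall>v. Q v = B v v"
    and e_basis: "inj_on e {..<n} \<and> independent (e ` {..<n}) \<and> span (e ` {..<n}) = UNIV"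
    and e_orth: "\<forall>i<n. \<forall>j<n. i \<noteq> j \<longrightarrow> B (e i) (e j) = 0"
    and e_norm: "\<forall>i<n. Q (e i) = 1 \<or> Q (e i) = -1"
    and signature: "card {i. i < n \<and> Q (e i) = 1} = 1"
    and rep: "clifford_rep Q \<gamma>"
    and irr: "irreducible_rep \<gamma>"
    and herm_H: "hermitian_form H"
    and nondeg_H: "nondegenerate_form H"
    and compat: "c_compatible H \<gamma>"
    and spacelike: "Q w < 0"
  shows "(let chi = chirality n e \<gamma>;
             KL = {\<psi>. chi *v \<psi> = - \<psi>};
             KR = {\<psi>. chi *v \<psi> = \<psi>};
             hw = (\<lambda>\<psi> \<phi>. herm H \<psi> (\<gamma> w *v \<phi>))
         in (\<forall>\<psi>\<in>KL. \<forall>\<phi>\<in>KR. hw \<psi> \<phi> = 0 \<and> hw \<phi> \<psi> = 0)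
            \<and> (n > 2 \<longrightarrow> neutral_on hw KL \<and> neutral_on hw KR))"
proof -
  interpret cl n B Q e \<gamma> H
    by (rule cl.intro[OF even_n B_bil B_sym Q_def e_basis e_orth e_norm signature rep compat])
  show ?thesis by (rule main[OF spacelike])
qed

end
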